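(* Fix $d\in\mathbb{N}$ and $\varepsilon>0$. Let $a=\lceil 32/\varepsilon+2\rceil$ and $Q=\{a^{2j-1}: j\in\mathbb{N}\}\subseteq\mathbb{N}$. Then for all $m_1<\dots<m_d<k$ in $Q$ and all step preserving maps $F\colon S^+_{\ell_\infty^k}\to S^+_{\ell_1^k}$ with $\omega_F(\tfrac1d)\leq\tfrac{\varepsilon}{8}$, we have \[\Big\|F(z(\bar m))-\frac1k\sum_{i=1}^k e_i\Big\|_1\leq\varepsilon,\] where $\bar m=(m_1,\dots,m_d)$ and $(e_i)_{i=1}^k$ is the standard basis of $\mathbb{R}^k$.
   Context: For $p\in\{1,\infty\}$, $S^+_{\ell_p^k}=\{(x_i)_{i=1}^k\in\mathbb{R}^k: \|x\|_p=1,\ x_i\ge0 \text{ for all } i\}$. For $0=m_0<m_1<\dots<m_d<k$, $z(\bar m)=\sum_{s=1}^d\big(1-\frac{s-1}{d}\big)1_{(m_{s-1},m_s]}\in S^+_{\ell_\infty^k}$, where $1_{(a,b]}$ is the vector with entries $1$ at indices $i\in(a,b]$ and $0$ elsewhere. Writing $F=(F_i)_{i=1}^k$ for the coordinates, $F$ is step preserving if $x_i=x_j$ implies $F_i(x)=F_j(x)$ for all $x$ in the domain and all $i,j$. $\omega_F(t)=\sup\{\|F(x)-F(y)\|_1: \|x-y\|_\infty\le t\}$. *)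

theory Defs
  imports "HOL-Analysis.Analysis"
begin

text \<open>Vectors in R^k are represented as functions nat => real, indexed by {1..k},
  and (canonically) zero outside {1..k}.\<close>

definition pos_sphere_linf :: "nat \<Rightarrow> (nat \<Rightarrow> real) set" where
  "pos_sphere_linf k = {x. (\<forall>i. i \<notin> {1..k} \<longrightarrow> x i = 0) \<and> (\<forall>i\<in>{1..k}. x i \<ge> 0)
      \<and> Max ((\<lambda>i. \<bar>x i\<bar>) ` {1..k}) = 1}"

definition pos_sphere_l1 :: "nat \<Rightarrow> (nat \<Rightarrow> real) set" where
  "pos_sphere_l1 k = {x. (\<forall>i. i \<notin> {1..k} \<longrightarrow> x i = 0) \<and> (\<forall>i\<in>{1..k}. x i \<ge> 0)
      \<and> (\<Sum>i=1..k. \<bar>x i\<bar>) = 1}"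

definition norm_inf :: "nat \<Rightarrow> (nat \<Rightarrow> real) \<Rightarrow> real" where
  "norm_inf k x = Max ((\<lambda>i. \<bar>x i\<bar>) ` {1..k})"

definition norm_one :: "nat \<Rightarrow> (nat \<Rightarrow> real) \<Rightarrow> real" where
  "norm_one k x = (\<Sum>i=1..k. \<bar>x i\<bar>)"

definition step_preserving :: "nat \<Rightarrow> ((nat \<Rightarrow> real) \<Rightarrow> (nat \<Rightarrow> real)) \<Rightarrow> bool" where
  "step_preserving k F \<longleftrightarrow> (\<forall>x\<in>pos_sphere_linf k. \<forall>i\<in>{1..k}. \<forall>j\<in>{1..k}.
      x i = x j \<longrightarrow> F x i = F x j)"

definition modulus :: "nat \<Rightarrow> ((nat \<Rightarrow> real) \<Rightarrow> (nat \<Rightarrow> real)) \<Rightarrow> real \<Rightarrow> ereal" where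
  "modulus k F t = (SUP p \<in> {(x, y). x \<in> pos_sphere_linf k \<and> y \<in> pos_sphere_linf k
        \<and> norm_inf k (\<lambda>i. x i - y i) \<le> t}.
      ereal (norm_one k (\<lambda>i. F (fst p) i - F (snd p) i)))"

text \<open>z(m): m 1 < ... < m d, with m_0 = 0 by convention.\<close>
definition zvec :: "nat \<Rightarrow> (nat \<Rightarrow> nat) \<Rightarrow> nat \<Rightarrow> real" where
  "zvec d m i = (\<Sum>s=1..d. (1 - (real s - 1) / real d) *
      (if (if s = 1 then 0 else m (s - 1)) < i \<and> i \<le> m s then 1 else 0))"

end

theory Submission
  imports Defs
begin

lemma zval:
  fixes m :: "nat \<Rightarrow> nat"
  assumes d1: "d \<ge> 1" and mon: "\<And>s t. 1 \<le> s \<Longrightarrow> s \<le> t \<Longrightarrow> t \<le> d \<Longrightarrow> m s \<le> m t"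
    and s: "1 \<le> s" "s \<le> d+1" and lo: "s = 1 \<or> m (s-1) < i" and hi: "s = d+1 \<or> i \<le> m s"
    and i: "1 \<le> i"
  shows "zvec d m i = 1 - (real s - 1) / real d"
proof (cases "s = d+1")
  case True
  have "zvec d m i = 0" unfolding zvec_def
  proof (rule sum.neutral, rule ballI)
    fix t assume t: "t \<in> {1..d}"
    have "m d < i" using lo True d1 by auto
    moreover have "m t \<le> m d" using mon t by auto
    ultimately show "(1 - (real t - 1) / real d) * (if (if t = 1 then 0 else m (t - 1)) < i \<and> i \<le> m t then 1 else 0) = 0" by auto
  qed
  then show ?thesis using True d1 by simp
next
  case False
  hence sd: "s \<le> d" using s by auto
  have "zvec d m i = (\<Sum>t=1..d. if t = s then 1 - (real s - 1)/real d else 0)"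
    unfolding zvec_def
  proof (rule sum.cong[OF refl])
    fix t assume t: "t \<in> {1..d}"
    have "((if t = 1 then 0 else m (t - 1)) < i \<and> i \<le> m t) \<longleftrightarrow> t = s"
    proof
      assume A: "(if t = 1 then 0 else m (t - 1)) < i \<and> i \<le> m t"
      show "t = s"
      proof (rule ccontr)
        assume "t \<noteq> s"
        then consider "t < s" | "s < t" by linarith
        then show False
        proof cases
          case 1
          then have "s \<noteq> 1" "m t \<le> m (s-1)" using t mon[of t "s-1"] sd by auto
          then show False using A lo by auto
        next
          case 2
          then have "t \<noteq> 1" "m s \<le> m (t-1)" using t s mon[of s "t-1"] by auto
          then show False using A hi False by auto
        qed
      qed
    next
      assume "t = s" then show "(if t = 1 then 0 else m (t - 1)) < i \<and> i \<le> m t"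
        using lo hi False i by auto
    qed
    then show "(1 - (real t - 1) / real d) * (if (if t = 1 then 0 else m (t - 1)) < i \<and> i \<le> m t then 1 else 0) = (if t = s then 1 - (real s - 1) / real d else 0)" by auto
  qed
  also have "\<dots> = 1 - (real s - 1)/real d" using sd s by (simp add: sum.delta)
  finally show ?thesis .
qed

lemma blk_ex:
  fixes m :: "nat \<Rightarrow> nat"
  assumes "d \<ge> 1" "1 \<le> i"
  shows "\<exists>s. 1 \<le> s \<and> s \<le> d+1 \<and> (s = 1 \<or> m (s-1) < i) \<and> (s = d+1 \<or> i \<le> m s)"
proof (cases "m d < i")
  case True then show ?thesis by (intro exI[of _ "d+1"]) auto
next
  case False
  define s where "s = (LEAST t. 1 \<le> t \<and> i \<le> m t)"
  have ex: "1 \<le> d \<and> i \<le> m d" using False assms by auto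
  have P: "1 \<le> s \<and> i \<le> m s" unfolding s_def by (rule LeastI[of _ d]) (use ex in auto)
  have le: "s \<le> d" unfolding s_def by (rule Least_le) (use ex in auto)
  have "s = 1 \<or> m (s-1) < i"
  proof (rule ccontr)
    assume "\<not> ?thesis" then have a: "s \<noteq> 1" "i \<le> m (s-1)" by auto
    have "s - 1 < s" using P a by auto
    then have "\<not> (1 \<le> s - 1 \<and> i \<le> m (s-1))" unfolding s_def by (rule not_less_Least)
    then show False using a P by auto
  qed
  then show ?thesis using P le by auto
qed

lemma z0: "zvec d m 0 = 0" unfolding zvec_def by simp

lemma z_in:
  fixes m :: "nat \<Rightarrow> nat"
  assumes d1: "d \<ge> 1" and mon: "\<And>s t. 1 \<le> s \<Longrightarrow> s \<le> t \<Longrightarrow> t \<le> d \<Longrightarrow> m s \<le> m t"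
    and m1: "1 \<le> m 1" and mk: "m d < k"
  shows "zvec d m \<in> pos_sphere_linf k"
proof -
  have val: "\<exists>s. 1 \<le> s \<and> s \<le> d+1 \<and> zvec d m i = 1 - (real s - 1) / real d" if i1: "1 \<le> i" for i
  proof -
    obtain s where s: "1 \<le> s" "s \<le> d+1" "s = 1 \<or> m (s-1) < i" "s = d+1 \<or> i \<le> m s"
      using blk_ex[OF d1 i1, of m] by blast
    have "zvec d m i = 1 - (real s - 1) / real d"
      by (rule zval) (use s d1 i1 mon in auto)
    then show ?thesis using s by blast
  qed
  have rng: "0 \<le> zvec d m i \<and> zvec d m i \<le> 1" if i1: "1 \<le> i" for i
  proof -
    obtain s where s: "1 \<le> s" "s \<le> d+1" "zvec d m i = 1 - (real s - 1) / real d"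
      using val[OF i1] by blast
    have "(real s - 1) / real d \<le> 1" using s d1 by (simp add: divide_le_eq_1)
    moreover have "0 \<le> (real s - 1) / real d" using s by simp
    ultimately show ?thesis using s by linarith
  qed
  have out: "zvec d m i = 0" if "i \<notin> {1..k}" for i
  proof (cases "i = 0")
    case True then show ?thesis by (simp add: z0)
  next
    case False
    then have "m d < i" "1 \<le> i" using that mk by auto
    then have "zvec d m i = 1 - (real (d+1) - 1) / real d"
      by (intro zval) (use d1 mon in auto)
    then show ?thesis using d1 by simp
  qed
  have "zvec d m 1 = 1 - (real 1 - 1) / real d"
    by (intro zval) (use d1 mon m1 in auto)
  then have one: "zvec d m 1 = 1" by simp
  have "Max ((\<lambda>i. \<bar>zvec d m i\<bar>) ` {1..k}) = 1"
  proof (rule Max_eqI)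
    show "finite ((\<lambda>i. \<bar>zvec d m i\<bar>) ` {1..k})" by simp
    show "y \<le> 1" if "y \<in> (\<lambda>i. \<bar>zvec d m i\<bar>) ` {1..k}" for y
      using that rng by auto
    show "1 \<in> (\<lambda>i. \<bar>zvec d m i\<bar>) ` {1..k}"
      using one mk m1 by (intro image_eqI[of _ _ 1]) auto
  qed
  then show ?thesis unfolding pos_sphere_linf_def using out rng by auto
qed


lemma gap_mono:
  fixes m :: "nat \<Rightarrow> nat"
  assumes a1: "a \<ge> 1" and gap: "\<And>s t. 1 \<le> s \<Longrightarrow> s < t \<Longrightarrow> t \<le> d \<Longrightarrow> a*a*m s \<le> m t"
    and "1 \<le> s" "s \<le> t" "t \<le> d"
  shows "m s \<le> m t"
proof (cases "s = t")
  case False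
  then have "a*a*m s \<le> m t" using gap assms by auto
  moreover have "m s \<le> a*a*m s" using a1 by (simp add: mult_le_mono)
  ultimately show ?thesis by linarith
qed simp

lemma zdiff:
  fixes m :: "nat \<Rightarrow> nat"
  assumes d1: "d \<ge> 1" and a3: "a \<ge> 3"
  and gap: "\<And>s t. 1 \<le> s \<Longrightarrow> s < t \<Longrightarrow> t \<le> d \<Longrightarrow> a*a*m s \<le> m t"
  and pos: "\<And>s. 1 \<le> s \<Longrightarrow> s \<le> d \<Longrightarrow> 1 \<le> m s"
  and i1: "1 \<le> i"
  shows "\<bar>zvec d m i - zvec d (\<lambda>s. a * m s) i\<bar> \<le> 1 / real d"
proof -
  have mon: "m s \<le> m t" if "1 \<le> s" "s \<le> t" "t \<le> d" for s t
    by (rule gap_mono[where a=a and d=d]) (use gap that a3 in auto)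
  have mon': "a * m s \<le> a * m t" if "1 \<le> s" "s \<le> t" "t \<le> d" for s t
    using mon[OF that] by simp
  obtain s where s: "1 \<le> s" "s \<le> d+1" "s = 1 \<or> m (s-1) < i" "s = d+1 \<or> i \<le> m s"
    using blk_ex[OF d1 i1, of m] by blast
  obtain s' where s': "1 \<le> s'" "s' \<le> d+1" "s' = 1 \<or> a * m (s'-1) < i" "s' = d+1 \<or> i \<le> a * m s'"
    using blk_ex[OF d1 i1, of "\<lambda>s. a * m s"] by blast
  have z: "zvec d m i = 1 - (real s - 1) / real d"
    by (rule zval) (use s d1 i1 mon in auto)
  have z': "zvec d (\<lambda>s. a * m s) i = 1 - (real s' - 1) / real d"
    by (rule zval) (use s' d1 i1 mon' in auto)
  have le1: "s' \<le> s"
  proof (rule ccontr)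
    assume "\<not> s' \<le> s"
    then have "s \<le> d" "s' \<noteq> 1" "s \<le> s' - 1" "s' - 1 \<le> d" using s s' by auto
    then have "a * m (s'-1) < i" "i \<le> m s" "m s \<le> m (s'-1)" using s s' mon by auto
    moreover have "m (s'-1) \<le> a * m (s'-1)" using a3 by simp
    ultimately show False by linarith
  qed
  have le2: "s \<le> s' + 1"
  proof (rule ccontr)
    assume "\<not> s \<le> s' + 1"
    then have "s \<noteq> 1" "s' \<le> d" "s' < s - 1" "s - 1 \<le> d" using s s' by auto
    then have A: "m (s-1) < i" "i \<le> a * m s'" "a * a * m s' \<le> m (s-1)" using s s' gap by auto
    have "1 \<le> m s'" using pos s' \<open>s' \<le> d\<close> by auto
    then have "a * m s' * 1 < a * m s' * a" using a3 by (intro mult_strict_left_mono) auto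
    then have "a * m s' < a * a * m s'" by (simp add: mult.commute mult.left_commute)
    then show False using A by linarith
  qed
  have "\<bar>zvec d m i - zvec d (\<lambda>s. a * m s) i\<bar> = \<bar>real s' - real s\<bar> / real d"
  proof -
    have "(real s' - 1) / real d - (real s - 1) / real d = (real s' - real s) / real d"
      by (simp add: diff_divide_distrib)
    then show ?thesis unfolding z z' by simp
  qed
  also have "\<dots> \<le> 1 / real d" using le1 le2 d1 by (intro divide_right_mono) auto
  finally show ?thesis .
qed

lemma split_ioc:
  fixes h :: "nat \<Rightarrow> real"
  assumes "x \<le> y" "y \<le> z"
  shows "sum h {x<..z} = sum h {x<..y} + sum h {y<..z}"
proof -
  have "{x<..z} = {x<..y} \<union> {y<..z}" using assms by auto
  then show ?thesis by (simp add: sum.union_disjoint[symmetric] ivl_disj_int)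
qed

lemma tele:
  fixes h :: "nat \<Rightarrow> real" and L :: "nat \<Rightarrow> nat"
  assumes "\<And>j. L j \<le> L (Suc j)"
  shows "(\<Sum>j<n. sum h {L j<..L (Suc j)}) = sum h {L 0<..L n}"
proof (induction n)
  case (Suc n)
  have "L 0 \<le> L n" using assms by (induction n) (auto intro: order_trans)
  then show ?case using Suc split_ioc[of "L 0" "L n" "L (Suc n)" h] assms by simp
qed simp


lemma key_ineq:
  fixes p x I J B cs cn cg \<beta> :: real
  assumes "0 \<le> p" "p \<le> x" "x \<le> 3/2*I" "x \<le> J" "x \<le> \<beta>*B" "0 \<le> cs" "0 \<le> cn"
  shows "p*cs \<le> 3/2*(I*\<bar>cs-cg\<bar> + J*\<bar>cn-cg\<bar>) + \<beta>*(B*cn)"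
proof -
  have x0: "0 \<le> x" using assms by linarith
  have "p*cs \<le> x*cs" using assms by (intro mult_right_mono) auto
  also have "\<dots> \<le> x*(\<bar>cs-cg\<bar> + \<bar>cn-cg\<bar> + cn)"
    using x0 assms by (intro mult_left_mono) auto
  also have "\<dots> = x*\<bar>cs-cg\<bar> + x*\<bar>cn-cg\<bar> + x*cn" by (simp add: algebra_simps)
  also have "x*\<bar>cs-cg\<bar> \<le> 3/2*I*\<bar>cs-cg\<bar>" using assms by (intro mult_right_mono) auto
  also have "x*\<bar>cn-cg\<bar> \<le> J*\<bar>cn-cg\<bar>" using assms by (intro mult_right_mono) auto
  also have "x*cn \<le> \<beta>*B*cn" using assms by (intro mult_right_mono) auto
  finally have A: "p*cs \<le> 3/2*I*\<bar>cs-cg\<bar> + J*\<bar>cn-cg\<bar> + \<beta>*B*cn" by simp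
  have "0 \<le> J*\<bar>cn-cg\<bar>" using assms x0 by simp
  then show ?thesis using A by (simp add: algebra_simps)
qed

lemma main:
  fixes m :: "nat \<Rightarrow> nat" and F :: "(nat \<Rightarrow> real) \<Rightarrow> (nat \<Rightarrow> real)" and a k d :: nat
    and \<epsilon> :: real
  assumes d1: "d \<ge> 1" and a3: "a \<ge> 3"
  and gap: "\<And>s t. 1 \<le> s \<Longrightarrow> s < t \<Longrightarrow> t \<le> d \<Longrightarrow> a*a*m s \<le> m t"
  and pos: "\<And>s. 1 \<le> s \<Longrightarrow> s \<le> d \<Longrightarrow> 1 \<le> m s"
  and gapk: "a*a*m d \<le> k"
  and Fmap: "\<forall>x\<in>pos_sphere_linf k. F x \<in> pos_sphere_l1 k"
  and sp: "step_preserving k F"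
  and modu: "modulus k F (1 / real d) \<le> ereal (\<epsilon> / 8)"
  and aeps: "32/\<epsilon> + 2 \<le> real a" and eps: "\<epsilon> > 0"
  shows "norm_one k (\<lambda>i. F (zvec d m) i - 1 / real k) \<le> \<epsilon>"
proof -
  define m' where "m' = (\<lambda>s. a * m s)"
  define f where "f = F (zvec d m)"
  define g where "g = F (zvec d m')"
  have mon: "m s \<le> m t" if "1 \<le> s" "s \<le> t" "t \<le> d" for s t
    by (rule gap_mono[where a=a and d=d]) (use gap that a3 in auto)
  have mon': "m' s \<le> m' t" if "1 \<le> s" "s \<le> t" "t \<le> d" for s t
    using mon[OF that] unfolding m'_def by simp
  have ax: "a * x < a*a*x" "x < a*a*x" if "1 \<le> x" for x
  proof -
    have "a * x * 1 < a * x * a" using that a3 by (intro mult_strict_left_mono) auto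
    then show "a * x < a*a*x" by (simp add: mult.commute mult.left_commute)
    moreover have "x \<le> a * x" using a3 by simp
    ultimately show "x < a*a*x" by linarith
  qed
  have md1: "1 \<le> m d" using pos d1 by auto
  have amd: "a * m d < a * a * m d" using md1 a3 by simp
  have amd': "m d \<le> a * m d" using a3 by simp
  have mdk: "m d < k" using amd amd' gapk by linarith
  have k1: "1 \<le> k" using mdk by simp
  have amdk: "a * m d < k" using amd gapk by linarith
  have zin: "zvec d m \<in> pos_sphere_linf k"
    by (rule z_in) (use d1 mon pos mdk in auto)
  have zin': "zvec d m' \<in> pos_sphere_linf k"
    by (rule z_in) (use d1 mon' pos amdk a3 in \<open>auto simp: m'_def\<close>)
  have fpos: "0 \<le> f i" if "i \<in> {1..k}" for i
    using Fmap zin that unfolding f_def pos_sphere_l1_def by auto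
  have fsum: "(\<Sum>i=1..k. f i) = 1"
  proof -
    have "(\<Sum>i=1..k. \<bar>f i\<bar>) = 1" using Fmap zin unfolding f_def pos_sphere_l1_def by auto
    moreover have "(\<Sum>i=1..k. \<bar>f i\<bar>) = (\<Sum>i=1..k. f i)" using fpos by (intro sum.cong) auto
    ultimately show ?thesis by simp
  qed
  have ninf: "norm_inf k (\<lambda>i. zvec d m i - zvec d m' i) \<le> 1 / real d"
    unfolding norm_inf_def m'_def
    by (subst Max_le_iff) (use zdiff[OF d1 a3 gap pos] k1 in auto)
  have fg: "norm_one k (\<lambda>i. f i - g i) \<le> \<epsilon> / 8"
  proof -
    have "ereal (norm_one k (\<lambda>i. F (fst (zvec d m, zvec d m')) i - F (snd (zvec d m, zvec d m')) i))
          \<le> modulus k F (1 / real d)"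
      unfolding modulus_def by (rule SUP_upper) (use zin zin' ninf in auto)
    then have "ereal (norm_one k (\<lambda>i. f i - g i)) \<le> ereal (\<epsilon> / 8)"
      using modu unfolding f_def g_def by (simp del: ereal_less_eq)
    then show ?thesis by simp
  qed
  have stepf: "f i = f j" if "i \<in> {1..k}" "j \<in> {1..k}" "zvec d m i = zvec d m j" for i j
    using sp zin that unfolding step_preserving_def f_def by blast
  have stepg: "g i = g j" if "i \<in> {1..k}" "j \<in> {1..k}" "zvec d m' i = zvec d m' j" for i j
    using sp zin' that unfolding step_preserving_def g_def by blast
  define M where "M j = (if j = 0 then 0 else if j \<le> d then m j else k)" for j
  have M0: "M 0 = 0" and Md: "M d = m d" and Msd: "M (Suc d) = k"
    using d1 unfolding M_def by auto
  have Mmono: "M j \<le> M (Suc j)" for j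
    unfolding M_def using mon[of j d] mon[of j "Suc j"] mdk by auto
  have Mk: "M j \<le> k" for j
    unfolding M_def using mon[of j d] mdk by auto
  have Mstrict: "M (s-1) < M s" if sr: "1 \<le> s" "s \<le> d+1" for s
  proof -
    consider "s = 1" | "1 < s" "s \<le> d" | "s = d+1" using sr by linarith
    then show ?thesis
    proof cases
      case 1 then show ?thesis using pos[of 1] d1 unfolding M_def by auto
    next
      case 2
      have "a*a*m (s-1) \<le> m s" using gap 2 by auto
      moreover have "m (s-1) < a*a*m (s-1)" by (rule ax(2)) (use pos[of "s-1"] 2 in auto)
      ultimately have "m (s-1) < m s" by linarith
      then show ?thesis using 2 unfolding M_def by auto
    next
      case 3 then show ?thesis using mdk d1 unfolding M_def by auto
    qed
  qed
  have fconst: "f i = f (M s)" if s: "1 \<le> s" "s \<le> d+1" and i: "M (s-1) < i" "i \<le> M s" for s i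
  proof -
    have b1: "(s = 1 \<or> m (s-1) < i) \<and> (s = d+1 \<or> i \<le> m s)"
      using s i unfolding M_def by (auto split: if_splits)
    have b2: "(s = 1 \<or> m (s-1) < M s) \<and> (s = d+1 \<or> M s \<le> m s)"
      using s Mstrict[OF s] unfolding M_def by (auto split: if_splits)
    have i1: "1 \<le> i" using i by simp
    have "zvec d m i = 1 - (real s - 1) / real d"
      by (rule zval) (use d1 mon s b1 i1 in auto)
    moreover have "zvec d m (M s) = 1 - (real s - 1) / real d"
      by (rule zval) (use d1 mon s b2 Mstrict[OF s] in auto)
    ultimately show ?thesis using stepf[of i "M s"] i Mk[of s] Mstrict[OF s] by auto
  qed
  have gconst: "g i = g (m s)" if s: "1 \<le> s" "s \<le> d" and i: "a * M (s-1) < i" "i \<le> a * m s" for s i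
  proof -
    have lt: "a * M (s-1) < m s"
    proof (cases "s = 1")
      case True then show ?thesis using pos[of 1] d1 unfolding M_def by auto
    next
      case False
      have "a*a*m (s-1) \<le> m s" using gap False s by auto
      moreover have "a * m (s-1) < a*a*m (s-1)" by (rule ax(1)) (use pos[of "s-1"] False s in auto)
      ultimately have "a * m (s-1) < m s" by linarith
      then show ?thesis using False s unfolding M_def by auto
    qed
    have b1: "(s = 1 \<or> m' (s-1) < i) \<and> (s = d+1 \<or> i \<le> m' s)"
      using s i unfolding M_def m'_def by (auto split: if_splits)
    have b2: "(s = 1 \<or> m' (s-1) < m s) \<and> (s = d+1 \<or> m s \<le> m' s)"
      using s lt a3 unfolding M_def m'_def by (auto split: if_splits)
    have i1: "1 \<le> i" using i by simp
    have ms1: "1 \<le> m s" using pos s by auto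
    have msd: "m s \<le> m d" using mon[of s d] s by simp
    then have "a * m s \<le> a * m d" by simp
    then have ik: "i \<le> k" "m s \<le> k" using i amdk msd mdk by linarith+
    have "zvec d m' i = 1 - (real s - 1) / real d"
      by (rule zval) (use d1 mon' s b1 i1 in auto)
    moreover have "zvec d m' (m s) = 1 - (real s - 1) / real d"
      by (rule zval) (use d1 mon' s b2 ms1 in auto)
    ultimately show ?thesis using stepg[of i "m s"] i1 ms1 ik by auto
  qed
  define \<beta> where "\<beta> = 1 / (real a * real a - 1)"
  have ra3: "3 \<le> real a" using a3 by simp
  have aa9: "9 \<le> real a * real a" using mult_mono[OF ra3 ra3] by simp
  have \<beta>0: "0 \<le> \<beta>" unfolding \<beta>_def using aa9 by simp
  have perj: "sum f {M j<..M (Suc j)} \<le> 3/2 * sum (\<lambda>i. \<bar>f i - g i\<bar>) {a * M j<..a * M (Suc j)}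
      + \<beta> * sum f {M (Suc j)<..M (Suc (Suc j))}" if j: "j < d" for j
  proof -
    define ms where "ms = m (Suc j)"
    define mp where "mp = M j"
    define mn where "mn = M (Suc (Suc j))"
    have Ms: "M (Suc j) = ms" using j unfolding M_def ms_def by auto
    have ms1: "1 \<le> ms" using pos j ms_def by auto
    have h1: "3 * (a * mp) \<le> ms"
    proof (cases "j = 0")
      case True then show ?thesis unfolding mp_def M_def by simp
    next
      case False
      then have "a*a*m j \<le> ms" using gap[of j "Suc j"] j unfolding ms_def by auto
      moreover have "3 * (a * m j) \<le> a*a*m j" using mult_le_mono1[OF a3, of "a*m j"] by (simp add: mult.assoc)
      ultimately have "3 * (a * m j) \<le> ms" by linarith
      then show ?thesis using False j unfolding mp_def M_def by auto
    qed
    have h2: "a * a * ms \<le> mn"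
    proof (cases "Suc (Suc j) \<le> d")
      case True then show ?thesis using gap[of "Suc j" "Suc (Suc j)"] unfolding mn_def M_def ms_def by auto
    next
      case False then have "Suc j = d" using j by auto
      then show ?thesis using gapk unfolding mn_def M_def ms_def by auto
    qed
    have mpms: "mp \<le> a * mp" "a * mp \<le> ms" "ms \<le> a * ms" using h1 a3 by auto
    have ams: "a * ms < mn" using h2 ax(1)[OF ms1] by linarith
    have Mn: "M (Suc (Suc j)) = mn" by (simp add: mn_def)
    have mnk: "mn \<le> k" using Mk mn_def by auto
    have Mj: "M (Suc j - 1) = mp" by (simp add: mp_def)
    have Mj2: "M (Suc (Suc j) - 1) = ms" using Ms by simp
    have fA: "f i = f ms" if ii: "mp < i" "i \<le> ms" for i
    proof -
      have "f i = f (M (Suc j))" by (rule fconst) (use j ii Mj Ms in simp_all)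
      then show ?thesis using Ms by simp
    qed
    have fB: "f i = f mn" if ii: "ms < i" "i \<le> mn" for i
    proof -
      have "f i = f (M (Suc (Suc j)))" by (rule fconst) (use j ii Mj2 Mn in simp_all)
      then show ?thesis using Mn by simp
    qed
    have gA: "g i = g ms" if ii: "a * mp < i" "i \<le> a * ms" for i
    proof -
      have "g i = g (m (Suc j))" by (rule gconst) (use j ii Mj in \<open>simp_all add: ms_def\<close>)
      then show ?thesis by (simp add: ms_def)
    qed
    have S1: "sum f {mp<..ms} = real (ms - mp) * f ms"
    proof -
      have "sum f {mp<..ms} = sum (\<lambda>i. f ms) {mp<..ms}"
        apply (rule sum.cong[OF refl])
        subgoal for x using fA[of x] by auto
        done
      then show ?thesis by simp
    qed
    have S2: "sum (\<lambda>i. \<bar>f i - g i\<bar>) {a*mp<..ms} = real (ms - a*mp) * \<bar>f ms - g ms\<bar>"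
    proof -
      have "sum (\<lambda>i. \<bar>f i - g i\<bar>) {a*mp<..ms} = sum (\<lambda>i. \<bar>f ms - g ms\<bar>) {a*mp<..ms}"
        apply (rule sum.cong[OF refl])
        subgoal for x using fA[of x] gA[of x] mpms by auto
        done
      then show ?thesis by simp
    qed
    have S3: "sum (\<lambda>i. \<bar>f i - g i\<bar>) {ms<..a*ms} = real (a*ms - ms) * \<bar>f mn - g ms\<bar>"
    proof -
      have "sum (\<lambda>i. \<bar>f i - g i\<bar>) {ms<..a*ms} = sum (\<lambda>i. \<bar>f mn - g ms\<bar>) {ms<..a*ms}"
        apply (rule sum.cong[OF refl])
        subgoal for x using fB[of x] gA[of x] mpms ams by auto
        done
      then show ?thesis by simp
    qed
    have S4: "sum f {ms<..mn} = real (mn - ms) * f mn"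
    proof -
      have "sum f {ms<..mn} = sum (\<lambda>i. f mn) {ms<..mn}"
        apply (rule sum.cong[OF refl])
        subgoal for x using fB[of x] by auto
        done
      then show ?thesis by simp
    qed
    have Ssplit: "sum (\<lambda>i. \<bar>f i - g i\<bar>) {a*mp<..a*ms} = sum (\<lambda>i. \<bar>f i - g i\<bar>) {a*mp<..ms} + sum (\<lambda>i. \<bar>f i - g i\<bar>) {ms<..a*ms}"
      by (rule split_ioc) (use mpms in auto)
    have cs0: "0 \<le> f ms" using fpos[of ms] ms1 Ms Mk[of "Suc j"] by auto
    have cn0: "0 \<le> f mn" using fpos[of mn] ms1 ams mnk by auto
    have r1: "0 \<le> real (ms - mp)" "real (ms - mp) \<le> real ms" by auto
    have r2: "real ms \<le> 3/2 * real (ms - a*mp)"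
    proof -
      have "3 * (real a * real mp) \<le> real ms" using h1 by (metis of_nat_le_iff of_nat_mult of_nat_numeral)
      then show ?thesis using mpms by (simp add: of_nat_diff)
    qed
    have r3: "real ms \<le> real (a*ms - ms)"
    proof -
      have "3 * ms \<le> a * ms" using a3 by (intro mult_le_mono1)
      then have "ms \<le> a * ms - ms" by linarith
      then show ?thesis by (metis of_nat_le_iff)
    qed
    have r4: "real ms \<le> \<beta> * real (mn - ms)"
    proof -
      have "real a * real a * real ms \<le> real mn" using h2 by (metis of_nat_le_iff of_nat_mult)
      then have A: "(real a * real a - 1) * real ms \<le> real (mn - ms)"
        using ams by (simp add: of_nat_diff algebra_simps)
      have pos': "0 < real a * real a - 1" using aa9 by simp
      have "real ms \<le> real (mn - ms) / (real a * real a - 1)"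
        using A pos' by (simp add: pos_le_divide_eq mult.commute)
      then show ?thesis unfolding \<beta>_def by (simp del: of_nat_diff)
    qed
    have "real (ms - mp) * f ms \<le> 3/2*(real (ms - a*mp) * \<bar>f ms - g ms\<bar> + real (a*ms - ms) * \<bar>f mn - g ms\<bar>) + \<beta>*(real (mn - ms) * f mn)"
      by (rule key_ineq[OF r1(1) r1(2) r2 r3 r4 cs0 cn0])
    then show ?thesis
      unfolding Ms Mn mp_def[symmetric] using S1 S2 S3 S4 Ssplit by simp
  qed
  have A1: "sum f {0<..m d} = (\<Sum>j<d. sum f {M j<..M (Suc j)})"
    using tele[of M f d] Mmono M0 Md by simp
  have A2: "(\<Sum>j<d. sum f {M j<..M (Suc j)}) \<le> (\<Sum>j<d. 3/2 * sum (\<lambda>i. \<bar>f i - g i\<bar>) {a*M j<..a*M (Suc j)}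
      + \<beta> * sum f {M (Suc j)<..M (Suc (Suc j))})"
    by (rule sum_mono) (rule perj; simp)
  have A3: "(\<Sum>j<d. 3/2 * sum (\<lambda>i. \<bar>f i - g i\<bar>) {a*M j<..a*M (Suc j)}
      + \<beta> * sum f {M (Suc j)<..M (Suc (Suc j))}) = 3/2 * (\<Sum>j<d. sum (\<lambda>i. \<bar>f i - g i\<bar>) {a*M j<..a*M (Suc j)})
      + \<beta> * (\<Sum>j<d. sum f {M (Suc j)<..M (Suc (Suc j))})"
    by (simp add: sum.distrib sum_distrib_left)
  have A4: "(\<Sum>j<d. sum (\<lambda>i. \<bar>f i - g i\<bar>) {a*M j<..a*M (Suc j)}) = sum (\<lambda>i. \<bar>f i - g i\<bar>) {0<..a*m d}"
    using tele[of "\<lambda>j. a * M j" "\<lambda>i. \<bar>f i - g i\<bar>" d] Mmono M0 Md by simp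
  have A5: "(\<Sum>j<d. sum f {M (Suc j)<..M (Suc (Suc j))}) = sum f {M 1<..k}"
    using tele[of "\<lambda>j. M (Suc j)" f d] Mmono Msd by simp
  have A6: "sum (\<lambda>i. \<bar>f i - g i\<bar>) {0<..a*m d} \<le> \<epsilon>/8"
  proof -
    have "sum (\<lambda>i. \<bar>f i - g i\<bar>) {0<..a*m d} \<le> sum (\<lambda>i. \<bar>f i - g i\<bar>) {1..k}"
      by (rule sum_mono2) (use amdk in auto)
    then show ?thesis using fg unfolding norm_one_def by simp
  qed
  have A7: "sum f {M 1<..k} \<le> 1"
  proof -
    have "sum f {M 1<..k} \<le> sum f {1..k}" by (rule sum_mono2) (use fpos in auto)
    then show ?thesis using fsum by simp
  qed
  have A8: "\<beta> * sum f {M 1<..k} \<le> \<beta>" using mult_left_mono[OF A7 \<beta>0] by simp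
  have P: "sum f {0<..m d} \<le> 3/2 * (\<epsilon>/8) + \<beta>"
  proof -
    have B: "sum f {0<..m d} \<le> 3/2 * sum (\<lambda>i. \<bar>f i - g i\<bar>) {0<..a*m d} + \<beta> * sum f {M 1<..k}"
      using A2 unfolding A1[symmetric] A3 A4 A5 .
    show ?thesis using B A6 A8 by linarith
  qed
  have P0: "0 \<le> sum f {0<..m d}" by (rule sum_nonneg) (use fpos mdk in auto)
  have split1: "{1..k} = {0<..k}" by auto
  have nsplit: "norm_one k (\<lambda>i. f i - 1 / real k) = sum (\<lambda>i. \<bar>f i - 1 / real k\<bar>) {0<..m d} + sum (\<lambda>i. \<bar>f i - 1 / real k\<bar>) {m d<..k}"
    unfolding norm_one_def split1 by (rule split_ioc) (use mdk in auto)
  have T1: "sum (\<lambda>i. \<bar>f i - 1 / real k\<bar>) {0<..m d} \<le> sum f {0<..m d} + real (m d) / real k"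
  proof -
    have "sum (\<lambda>i. \<bar>f i - 1 / real k\<bar>) {0<..m d} \<le> sum (\<lambda>i. f i + 1 / real k) {0<..m d}"
    proof (rule sum_mono)
      fix i assume "i \<in> {0<..m d}"
      then have "0 \<le> f i" using fpos[of i] mdk by auto
      moreover have "0 \<le> 1 / real k" by simp
      ultimately show "\<bar>f i - 1 / real k\<bar> \<le> f i + 1 / real k" by linarith
    qed
    then show ?thesis by (simp add: sum.distrib)
  qed
  have fk: "f i = f k" if "i \<in> {m d<..k}" for i
  proof -
    have "f i = f (M (d+1))" by (rule fconst) (use that Md d1 Msd in simp_all)
    then show ?thesis using Msd by simp
  qed
  have T2: "sum (\<lambda>i. \<bar>f i - 1 / real k\<bar>) {m d<..k} = real (k - m d) * \<bar>f k - 1 / real k\<bar>"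
  proof -
    have "sum (\<lambda>i. \<bar>f i - 1 / real k\<bar>) {m d<..k} = sum (\<lambda>i. \<bar>f k - 1 / real k\<bar>) {m d<..k}"
      apply (rule sum.cong[OF refl])
      subgoal for x using fk[of x] by simp
      done
    then show ?thesis by simp
  qed
  have T3: "sum f {m d<..k} = real (k - m d) * f k"
  proof -
    have "sum f {m d<..k} = sum (\<lambda>i. f k) {m d<..k}"
      apply (rule sum.cong[OF refl])
      subgoal for x using fk[of x] by simp
      done
    then show ?thesis by simp
  qed
  have tot: "sum f {0<..m d} + sum f {m d<..k} = 1"
    using split_ioc[of 0 "m d" k f] mdk fsum split1 by simp
  define r where "r = real (m d) / real k"
  have kpos: "0 < real k" using k1 by simp
  have T4: "real (k - m d) * \<bar>f k - 1 / real k\<bar> \<le> sum f {0<..m d} + r"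
  proof -
    have D: "real (k - m d) = real k - real (m d)" using mdk by (simp add: of_nat_diff)
    have "real (k - m d) * \<bar>f k - 1 / real k\<bar> = \<bar>real (k - m d) * f k - real (k - m d) / real k\<bar>"
    proof -
      have "\<And>D x y::real. 0 \<le> D \<Longrightarrow> D * \<bar>x - 1 / y\<bar> = \<bar>D * x - D / y\<bar>"
      proof -
        fix D x y :: real assume "0 \<le> D"
        then have "D * \<bar>x - 1 / y\<bar> = \<bar>D * (x - 1/y)\<bar>" by (simp add: abs_mult)
        also have "D * (x - 1/y) = D * x - D / y" by (simp add: right_diff_distrib)
        finally show "D * \<bar>x - 1 / y\<bar> = \<bar>D * x - D / y\<bar>" .
      qed
      then show ?thesis by (metis of_nat_0_le_iff)
    qed
    also have "real (k - m d) / real k = 1 - r" unfolding D r_def using kpos by (simp add: field_simps)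
    also have "real (k - m d) * f k = 1 - sum f {0<..m d}" using tot T3 by simp
    finally have E: "real (k - m d) * \<bar>f k - 1 / real k\<bar> = \<bar>1 - sum f {0<..m d} - (1 - r)\<bar>" .
    have r0: "0 \<le> r" unfolding r_def by simp
    have "\<bar>1 - sum f {0<..m d} - (1 - r)\<bar> \<le> sum f {0<..m d} + r"
      unfolding abs_le_iff using P0 r0 by linarith
    then show ?thesis using E by simp
  qed
  have r_le: "r \<le> 1 / (real a * real a)"
  proof -
    have "real a * real a * real (m d) \<le> real k" using gapk by (metis of_nat_le_iff of_nat_mult)
    then show ?thesis unfolding r_def using kpos aa9 by (simp add: field_simps)
  qed
  have aa_b: "1 / (real a * real a) \<le> \<beta>" unfolding \<beta>_def using aa9
    by (intro divide_left_mono) auto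
  have b_le: "\<beta> \<le> \<epsilon> / 128"
  proof -
    have e1: "32 / \<epsilon> \<le> real a - 1" using aeps by linarith
    have e2: "4 \<le> real a + 1" using ra3 by linarith
    have "32 / \<epsilon> * 4 \<le> (real a - 1) * (real a + 1)"
      using mult_mono[OF e1 e2] eps a3 by simp
    then have "128 / \<epsilon> \<le> real a * real a - 1" by (simp add: algebra_simps)
    moreover have "0 < 128 / \<epsilon>" using eps by simp
    moreover have "0 < real a * real a - 1" using aa9 by simp
    ultimately have "1 / (real a * real a - 1) \<le> 1 / (128 / \<epsilon>)"
      by (intro divide_left_mono) (auto intro: mult_pos_pos)
    then show ?thesis unfolding \<beta>_def by simp
  qed
  have "norm_one k (\<lambda>i. f i - 1 / real k) \<le> \<epsilon>"
    using nsplit T1 T2 T4 P r_def r_le aa_b b_le eps by linarith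
  then show ?thesis unfolding f_def .
qed


lemma smono:
  fixes m :: "nat \<Rightarrow> nat"
  assumes cons: "\<forall>s\<in>{1..<d}. m s < m (s + 1)"
  shows "1 \<le> s \<Longrightarrow> s < t \<Longrightarrow> t \<le> d \<Longrightarrow> m s < m t"
proof (induction t)
  case (Suc t)
  show ?case
  proof (cases "s = t")
    case True then show ?thesis using cons Suc.prems by auto
  next
    case False
    then have "m s < m t" using Suc by auto
    moreover have "m t < m (Suc t)" using cons Suc.prems False by auto
    ultimately show ?thesis by linarith
  qed
qed simp

lemma Qgap:
  fixes a :: nat
  assumes a2: "a \<ge> 2" and x: "x \<in> {a ^ (2 * j - 1) | j. j \<ge> (1::nat)}"
    and y: "y \<in> {a ^ (2 * j - 1) | j. j \<ge> (1::nat)}" and xy: "x < y"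
  shows "a * a * x \<le> y"
proof -
  obtain j where j: "x = a ^ (2 * j - 1)" "j \<ge> 1" using x by auto
  obtain j' where j': "y = a ^ (2 * j' - 1)" "j' \<ge> 1" using y by auto
  have "2 * j - 1 < 2 * j' - 1"
    using xy j j' a2 by (metis power_less_imp_less_exp one_less_numeral_iff semiring_norm(76) le_less_trans less_le_trans one_le_numeral)
  then have e: "2 * j - 1 + 2 \<le> 2 * j' - 1" using j j' by presburger
  have "2 * j - 1 + 2 = Suc (Suc (2 * j - 1))" by simp
  then have "a ^ (2 * j - 1 + 2) = a * (a * a ^ (2 * j - 1))" by (simp only: power_Suc)
  then have "a * a * x = a ^ (2 * j - 1 + 2)" unfolding j(1) by (simp only: mult.assoc)
  also have "\<dots> \<le> a ^ (2 * j' - 1)" using e a2 by (intro power_increasing) auto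
  finally show ?thesis using j' by simp
qed

theorem theorem1p5:
  fixes d :: nat and \<epsilon> :: real
  assumes "d \<ge> 1" and "\<epsilon> > 0"
  defines "a \<equiv> nat \<lceil>32 / \<epsilon> + 2\<rceil>"
  defines "Q \<equiv> {a ^ (2 * j - 1) | j. j \<ge> (1::nat)}"
  shows "\<forall>(m :: nat \<Rightarrow> nat) (k :: nat) (F :: (nat \<Rightarrow> real) \<Rightarrow> (nat \<Rightarrow> real)).
           (\<forall>s\<in>{1..d}. m s \<in> Q) \<and> k \<in> Q \<and>
           (\<forall>s\<in>{1..<d}. m s < m (s + 1)) \<and> m d < k \<and>
           (\<forall>x\<in>pos_sphere_linf k. F x \<in> pos_sphere_l1 k) \<and>
           step_preserving k F \<and>
           modulus k F (1 / real d) \<le> ereal (\<epsilon> / 8)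
         \<longrightarrow> norm_one k (\<lambda>i. F (zvec d m) i - 1 / real k) \<le> \<epsilon>"
proof (intro allI impI)
  fix m :: "nat \<Rightarrow> nat" and k :: nat and F :: "(nat \<Rightarrow> real) \<Rightarrow> (nat \<Rightarrow> real)"
  assume H: "(\<forall>s\<in>{1..d}. m s \<in> Q) \<and> k \<in> Q \<and>
           (\<forall>s\<in>{1..<d}. m s < m (s + 1)) \<and> m d < k \<and>
           (\<forall>x\<in>pos_sphere_linf k. F x \<in> pos_sphere_l1 k) \<and>
           step_preserving k F \<and>
           modulus k F (1 / real d) \<le> ereal (\<epsilon> / 8)"
  then have mQ: "\<forall>s\<in>{1..d}. m s \<in> Q" and kQ: "k \<in> Q" and cons: "\<forall>s\<in>{1..<d}. m s < m (s + 1)"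
    and mdk: "m d < k" and Fm: "\<forall>x\<in>pos_sphere_linf k. F x \<in> pos_sphere_l1 k"
    and sp: "step_preserving k F" and modu: "modulus k F (1 / real d) \<le> ereal (\<epsilon> / 8)"
    by auto
  have c2: "2 < 32 / \<epsilon> + 2" using assms(2) by simp
  have aeps: "32 / \<epsilon> + 2 \<le> real a"
  proof -
    have h: "32 / \<epsilon> + 2 \<le> of_int \<lceil>32 / \<epsilon> + 2\<rceil>" by (rule le_of_int_ceiling)
    then have "(0::real) \<le> of_int \<lceil>32 / \<epsilon> + 2\<rceil>" using c2 by linarith
    then have "0 \<le> \<lceil>32 / \<epsilon> + 2\<rceil>" by (simp only: of_int_0_le_iff)
    moreover note h
    ultimately show ?thesis unfolding a_def by simp
  qed
  have a3: "a \<ge> 3"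
  proof -
    have "(2::int) < \<lceil>32 / \<epsilon> + 2\<rceil>" using c2 by (simp add: less_ceiling_iff)
    then show ?thesis unfolding a_def by linarith
  qed
  have Q1: "1 \<le> x" if "x \<in> Q" for x
    using that a3 unfolding Q_def by auto
  have gap: "a*a*m s \<le> m t" if "1 \<le> s" "s < t" "t \<le> d" for s t
    by (rule Qgap[of a]) (use a3 mQ that smono[OF cons that] in \<open>auto simp: Q_def\<close>)
  have pos: "1 \<le> m s" if "1 \<le> s" "s \<le> d" for s
    using Q1 mQ that by auto
  have gapk: "a*a*m d \<le> k"
    by (rule Qgap[of a]) (use a3 mQ kQ mdk assms(1) in \<open>auto simp: Q_def\<close>)
  show "norm_one k (\<lambda>i. F (zvec d m) i - 1 / real k) \<le> \<epsilon>"
    by (rule main[where m=m and F=F and a=a and k=k and d=d and \<epsilon>=\<epsilon>, OF assms(1) a3 gap pos gapk Fm sp modu aeps assms(2)])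
qed

end
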